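(* Let $p$ be a prime and $A_*$ a graded commutative $\mathbb F_p$-algebra. Then $[G_p(A_* ),G_p(A_* )]\subset G_p^{(0.5)}(A_* )$; $[G_p^{(0.5)}(A_* ),G_p^{(0.5)}(A_* )]\subset G_p^{(2)}(A_* )$; $[G_p^{(k)}(A_* ),G_p^{(k)}(A_* )]\subset G_p^{(k+2)}(A_* )$ for every positive integer $k$; $[G_p^{(k)}(A_* ),G_p(A_* )]\subset G_p^{(k+0.5)}(A_* )$ for every non-negative integer $k$; $[G_p^{(k+0.5)}(A_* ),G_p(A_* )]\subset G_p^{(k+1.5)}(A_* )$ for every non-negative integer $k$.
   Context: Graded commutative means $ab=(-1)^{\deg a\deg b}ba$. If $p=2$, $G_2(A_* )$ is the set of power series $\alpha(X)=\sum_{i\ge0}\alpha_iX^{2^i}\in A_*[[X]]$ ($X$ of degree $-1$) with $\alpha_i\in A_{2^i-1}$ and $\alpha_0=1$; in this case put $\epsilon=0$. If $p$ is odd, let $\epsilon$ have degree $-1$ with $\epsilon^2=0$, $X$ degree $-2$, and $G_p(A_* )$ is the set of $\alpha(X)=\sum_{i\ge0}\alpha_iX^{p^i}\in (A_*\otimes_{\mathbb F_p}\mathbb F_p[\epsilon]/(\epsilon^2))[[X]]$ with $\alpha_i$ homogeneous of degree $2(p^i-1)$ and $\alpha_0-1\in(\epsilon)$. The group law is $\alpha(X)\cdot\beta(X)=\beta(\alpha(X))$ (coefficient of $X^{p^i}$ equal to $\sum_{j=0}^i\alpha_{i-j}^{p^j}\beta_j$); the identity is $X$. For an integer $k\ge0$,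 $G_p^{(k)}(A_* )$ is the subgroup of elements of the form $X+\sum_{i\ge k+1}\alpha_iX^{p^i}$, and $G_p^{(k+0.5)}(A_* )$ the subgroup of elements of the form $X+\sum_{i\ge k+1}\alpha_iX^{p^i}$ with $\alpha_{k+1}\in(\epsilon)$. $[H,K]$ denotes the subgroup generated by commutators $h^{-1}k^{-1}hk$. *)

theory Defs
  imports "HOL-Algebra.Generated_Groups" "HOL-Computational_Algebra.Primes"
begin

text \<open>A graded commutative F_p-algebra structure on the ring type 'a:
  A n is the degree-n part (n :: int); 'a is the direct sum of the A n.\<close>
definition graded_comm_Fp_alg :: "nat \<Rightarrow> (int \<Rightarrow> 'a::ring_1 set) \<Rightarrow> bool" where
  "graded_comm_Fp_alg p A \<longleftrightarrow>
     (\<forall>n. 0 \<in> A n \<and> (\<forall>x\<in>A n. \<forall>y\<in>A n. x + y \<in> A n) \<and> (\<forall>x\<in>A n. - x \<in> A n)) \<and>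
     1 \<in> A 0 \<and>
     (\<forall>m n. \<forall>x\<in>A m. \<forall>y\<in>A n. x * y \<in> A (m + n)) \<and>
     (\<forall>x. \<exists>F f. finite F \<and> (\<forall>n\<in>F. f n \<in> A n) \<and> x = sum f F) \<and>
     (\<forall>F f. finite F \<longrightarrow> (\<forall>n\<in>F. f n \<in> A n) \<longrightarrow> sum f F = 0 \<longrightarrow> (\<forall>n\<in>F. f n = 0)) \<and>
     (\<forall>m n. \<forall>x\<in>A m. \<forall>y\<in>A n. x * y = (if even (m * n) then y * x else - (y * x))) \<and>
     of_nat p = (0::'a)"

text \<open>Degree of the coefficient alpha_i.\<close>
definition hdeg :: "nat \<Rightarrow> nat \<Rightarrow> int" where
  "hdeg p i = (if p = 2 then (2::int) ^ i - 1 else 2 * (int p ^ i - 1))"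

text \<open>Elements of A_* tensor F_p[eps]/(eps^2) are pairs (a,b) meaning a + b eps
  (i.e. a\<otimes>1 + b\<otimes>eps), eps of degree -1; for p = 2, eps = 0, i.e. b = 0.
  Homogeneity of degree d: a \<in> A d, b \<in> A (d+1).\<close>
definition ext_hom :: "nat \<Rightarrow> (int \<Rightarrow> 'a::ring_1 set) \<Rightarrow> int \<Rightarrow> 'a \<times> 'a \<Rightarrow> bool" where
  "ext_hom p A d x \<longleftrightarrow> fst x \<in> A d \<and> (if p = 2 then snd x = 0 else snd x \<in> A (d + 1))"

text \<open>Product (a + b eps)(c + d eps) = ac + (ad + (-1)^e bc) eps (Koszul sign rule),
  where e is the degree of the homogeneous right factor (c \<in> A e).\<close>
definition eps_mult :: "int \<Rightarrow> 'a::ring_1 \<times> 'a \<Rightarrow> 'a \<times> 'a \<Rightarrow> 'a \<times> 'a" where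
  "eps_mult e x y = (fst x * fst y,
      fst x * snd y + (if even e then snd x * fst y else - (snd x * fst y)))"

fun eps_pow :: "int \<Rightarrow> 'a::ring_1 \<times> 'a \<Rightarrow> nat \<Rightarrow> 'a \<times> 'a" where
  "eps_pow e x 0 = (1, 0)"
| "eps_pow e x (Suc n) = eps_mult e (eps_pow e x n) x"

text \<open>Power series alpha(X) = sum_i alpha_i X^(p^i) represented by coefficient sequences.\<close>
definition Gcarrier :: "nat \<Rightarrow> (int \<Rightarrow> 'a::ring_1 set) \<Rightarrow> (nat \<Rightarrow> 'a \<times> 'a) set" where
  "Gcarrier p A = {\<alpha>. (\<forall>i. ext_hom p A (hdeg p i) (\<alpha> i)) \<and> fst (\<alpha> 0) = 1}"

text \<open>Group law alpha . beta = beta(alpha(X)):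
  coefficient i is sum_{j=0..i} alpha_(i-j)^(p^j) beta_j.\<close>
definition Gmult :: "nat \<Rightarrow> (nat \<Rightarrow> 'a::ring_1 \<times> 'a) \<Rightarrow> (nat \<Rightarrow> 'a \<times> 'a) \<Rightarrow> (nat \<Rightarrow> 'a \<times> 'a)" where
  "Gmult p \<alpha> \<beta> = (\<lambda>i.
     let t = (\<lambda>j. eps_mult (hdeg p j) (eps_pow (hdeg p (i - j)) (\<alpha> (i - j)) (p ^ j)) (\<beta> j))
     in ((\<Sum>j\<le>i. fst (t j)), (\<Sum>j\<le>i. snd (t j))))"

definition Gone :: "nat \<Rightarrow> 'a::ring_1 \<times> 'a" where
  "Gone = (\<lambda>i. if i = 0 then (1, 0) else (0, 0))"

definition Gp :: "nat \<Rightarrow> (int \<Rightarrow> 'a::ring_1 set) \<Rightarrow> (nat \<Rightarrow> 'a \<times> 'a) monoid" where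
  "Gp p A = \<lparr>carrier = Gcarrier p A, monoid.mult = Gmult p, one = Gone\<rparr>"

text \<open>G_p^(k): elements X + sum_{i \<ge> k+1} alpha_i X^(p^i).\<close>
definition Gsub :: "nat \<Rightarrow> (int \<Rightarrow> 'a::ring_1 set) \<Rightarrow> nat \<Rightarrow> (nat \<Rightarrow> 'a \<times> 'a) set" where
  "Gsub p A k = {\<alpha> \<in> Gcarrier p A. \<alpha> 0 = (1, 0) \<and> (\<forall>i. 1 \<le> i \<and> i \<le> k \<longrightarrow> \<alpha> i = (0, 0))}"

text \<open>G_p^(k+0.5): additionally alpha_(k+1) \<in> (eps).\<close>
definition Gsub_half :: "nat \<Rightarrow> (int \<Rightarrow> 'a::ring_1 set) \<Rightarrow> nat \<Rightarrow> (nat \<Rightarrow> 'a \<times> 'a) set" where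
  "Gsub_half p A k = {\<alpha> \<in> Gsub p A k. fst (\<alpha> (k + 1)) = 0}"

definition comm_subgroup :: "('b, 'c) monoid_scheme \<Rightarrow> 'b set \<Rightarrow> 'b set \<Rightarrow> 'b set" where
  "comm_subgroup G H K = generate G
     {inv\<^bsub>G\<^esub> h \<otimes>\<^bsub>G\<^esub> inv\<^bsub>G\<^esub> k \<otimes>\<^bsub>G\<^esub> h \<otimes>\<^bsub>G\<^esub> k | h k. h \<in> H \<and> k \<in> K}"

end

theory Submission
  imports Defs
begin


definition central :: "'a::ring_1 \<Rightarrow> bool" where
  "central a \<longleftrightarrow> (\<forall>y. a * y = y * a)"

lemma central_0[simp]: "central 0" and central_1[simp]: "central 1"
  by (auto simp: central_def)
lemma central_add: "central a \<Longrightarrow> central b \<Longrightarrow> central (a + b)"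
  by (simp add: central_def algebra_simps)
lemma central_uminus: "central a \<Longrightarrow> central (- a)"
  by (simp add: central_def algebra_simps)
lemma central_diff: "central a \<Longrightarrow> central b \<Longrightarrow> central (a - b)"
  by (simp add: central_def algebra_simps)
lemma central_mult: "central a \<Longrightarrow> central b \<Longrightarrow> central (a * b)"
  unfolding central_def
proof (intro allI)
  fix y assume a: "\<forall>y. a * y = y * a" and b: "\<forall>y. b * y = y * b"
  have "a * b * y = a * (y * b)" using b by (simp add: mult.assoc)
  also have "\<dots> = (y * a) * b" using a by (simp flip: mult.assoc)
  finally show "a * b * y = y * (a * b)" by (simp add: mult.assoc)
qed

typedef (overloaded) ('a::ring_1) cd = "{x::'a \<times> 'a. central (fst x)}" morphisms rep abs
  by (rule exI[of _ "(0,0)"]) simp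

definition pm :: "'a::ring_1 \<times> 'a \<Rightarrow> 'a \<times> 'a \<Rightarrow> 'a \<times> 'a" where
  "pm x y = (fst x * fst y, fst x * snd y + snd x * fst y)"

lemma rep_central: "central (fst (rep x))"
  using rep[of x] by simp

lemma cd_eq_iff: "x = y \<longleftrightarrow> rep x = rep y"
  by (simp add: rep_inject)

instantiation cd :: (ring_1) comm_ring_1
begin
definition "0 = abs (0,0)"
definition "1 = abs (1,0)"
definition "x + y = abs (fst (rep x) + fst (rep y), snd (rep x) + snd (rep y))"
definition "- x = abs (- fst (rep x), - snd (rep x))"
definition "x - y = abs (fst (rep x) - fst (rep y), snd (rep x) - snd (rep y))"
definition "x * y = abs (pm (rep x) (rep y))"

lemma rep_0: "rep (0::'a cd) = (0,0)"
  by (simp add: zero_cd_def abs_inverse)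
lemma rep_1: "rep (1::'a cd) = (1,0)"
  by (simp add: one_cd_def abs_inverse)
lemma rep_add: "rep (x + y) = (fst (rep x) + fst (rep y), snd (rep x) + snd (rep y))"
  by (simp add: plus_cd_def abs_inverse central_add rep_central)
lemma rep_uminus: "rep (- x) = (- fst (rep x), - snd (rep x))"
  by (simp add: uminus_cd_def abs_inverse central_uminus rep_central)
lemma rep_diff: "rep (x - y) = (fst (rep x) - fst (rep y), snd (rep x) - snd (rep y))"
  by (simp add: minus_cd_def abs_inverse central_diff rep_central)
lemma rep_mult: "rep (x * y) = pm (rep x) (rep y)"
  by (simp add: times_cd_def abs_inverse central_mult rep_central pm_def)

lemmas rep_simps = rep_0 rep_1 rep_add rep_uminus rep_diff rep_mult

instance
proof
  fix a b c :: "'a cd"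
  show "a * b * c = a * (b * c)"
    by (simp add: cd_eq_iff rep_simps pm_def algebra_simps)
  show "a * b = b * a"
  proof -
    have 1: "fst (rep a) * y = y * fst (rep a)" for y using rep_central[of a] by (simp add: central_def)
    have 2: "fst (rep b) * y = y * fst (rep b)" for y using rep_central[of b] by (simp add: central_def)
    show ?thesis unfolding cd_eq_iff rep_simps pm_def prod_eq_iff fst_conv snd_conv
      using 1[of "snd (rep b)"] 2[of "snd (rep a)"] 1[of "fst (rep b)"] add.commute by metis
  qed
  show "1 * a = a"
    by (simp add: cd_eq_iff rep_simps pm_def)
  show "a + b + c = a + (b + c)"
    by (simp add: cd_eq_iff rep_simps algebra_simps)
  show "a + b = b + a"
    by (simp add: cd_eq_iff rep_simps algebra_simps)
  show "0 + a = a"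
    by (simp add: cd_eq_iff rep_simps)
  show "- a + a = 0"
    by (simp add: cd_eq_iff rep_simps)
  show "a - b = a + - b"
    by (simp add: cd_eq_iff rep_simps)
  show "(a + b) * c = a * c + b * c"
    by (simp add: cd_eq_iff rep_simps pm_def algebra_simps)
  show "(0::'a cd) \<noteq> 1" by (simp add: cd_eq_iff rep_simps)
qed
end



lemma frob:
  fixes x y :: "'b::comm_ring_1"
  assumes p: "prime p" and c: "of_nat p = (0::'b)"
  shows "(x + y) ^ p = x ^ p + y ^ p"
proof -
  have "(x + y) ^ p = (\<Sum>k\<le>p. of_nat (p choose k) * x ^ k * y ^ (p - k))"
    by (rule binomial_ring)
  also have "\<dots> = (\<Sum>k\<in>{0,p}. of_nat (p choose k) * x ^ k * y ^ (p - k))"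
  proof (intro sum.mono_neutral_right ballI)
    fix k assume "k \<in> {..p} - {0, p}"
    hence k: "k > 0" "k < p" by auto
    have "p dvd (p choose k)" by (rule dvd_choose_prime) (use k p in auto)
    then obtain m where "p choose k = p * m" by blast
    hence "of_nat (p choose k) = (0::'b)" using c by simp
    thus "of_nat (p choose k) * x ^ k * y ^ (p - k) = 0" by simp
  qed auto
  finally show ?thesis using p prime_gt_0_nat[OF p] by (simp add: add_ac)
qed

lemma frob_pow:
  fixes x y :: "'b::comm_ring_1"
  assumes p: "prime p" and c: "of_nat p = (0::'b)"
  shows "(x + y) ^ (p ^ j) = x ^ (p ^ j) + y ^ (p ^ j)"
proof (induction j)
  case (Suc j)
  have "(x + y) ^ (p ^ Suc j) = ((x + y) ^ (p ^ j)) ^ p"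
    by (metis power_Suc2 power_mult)
  also have "\<dots> = (x ^ (p ^ j)) ^ p + (y ^ (p ^ j)) ^ p" using Suc frob[OF p c] by simp
  finally show ?case by (metis power_Suc2 power_mult)
qed simp

lemma frob_sum:
  fixes f :: "'c \<Rightarrow> 'b::comm_ring_1"
  assumes p: "prime p" and c: "of_nat p = (0::'b)" and "finite S"
  shows "(sum f S) ^ (p ^ j) = (\<Sum>i\<in>S. f i ^ (p ^ j))"
  using \<open>finite S\<close>
proof (induction S rule: finite_induct)
  case empty
  have "0 < p ^ j" using prime_gt_0_nat[OF p] by simp
  then show ?case by (simp add: zero_power)
next
  case (insert x F)
  then show ?case by (simp add: frob_pow[OF p c])
qed

definition GM :: "nat \<Rightarrow> (nat \<Rightarrow> 'b::comm_ring_1) \<Rightarrow> (nat \<Rightarrow> 'b) \<Rightarrow> nat \<Rightarrow> 'b" where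
  "GM p a b i = (\<Sum>j\<le>i. a (i - j) ^ (p ^ j) * b j)"

lemma GM_assoc:
  fixes a b c :: "nat \<Rightarrow> 'b::comm_ring_1"
  assumes p: "prime p" and ch: "of_nat p = (0::'b)"
  shows "GM p (GM p a b) c n = GM p a (GM p b c) n"
proof -
  define g where "g i k = a (n - (i + k)) ^ (p ^ (i + k)) * b k ^ (p ^ i) * c i" for i k
  have L: "GM p (GM p a b) c n = (\<Sum>i\<le>n. \<Sum>k\<le>n-i. g i k)"
    unfolding GM_def
  proof (rule sum.cong[OF refl])
    fix i assume "i \<in> {..n}"
    have "(\<Sum>k\<le>n - i. a (n - i - k) ^ p ^ k * b k) ^ p ^ i
        = (\<Sum>k\<le>n - i. (a (n - i - k) ^ p ^ k * b k) ^ p ^ i)"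
      by (rule frob_sum[OF p ch]) simp
    also have "\<dots> = (\<Sum>k\<le>n - i. a (n - (i + k)) ^ (p ^ (i + k)) * b k ^ (p ^ i))"
      by (rule sum.cong[OF refl])
         (simp add: power_mult_distrib power_add diff_diff_left mult.commute flip: power_mult)
    finally show "(\<Sum>k\<le>n - i. a (n - i - k) ^ p ^ k * b k) ^ p ^ i * c i = (\<Sum>k\<le>n - i. g i k)"
      by (simp add: g_def sum_distrib_right)
  qed
  have R: "GM p a (GM p b c) n = (\<Sum>m\<le>n. \<Sum>i\<le>m. g i (m - i))"
    unfolding GM_def
  proof (rule sum.cong[OF refl])
    fix m assume "m \<in> {..n}"
    show "a (n - m) ^ p ^ m * (\<Sum>j\<le>m. b (m - j) ^ p ^ j * c j) = (\<Sum>i\<le>m. g i (m - i))"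
      unfolding sum_distrib_left
      by (rule sum.cong[OF refl]) (auto simp: g_def mult.assoc)
  qed
  have T: "(\<Sum>m\<le>n. \<Sum>i\<le>m. g i (m - i)) = (\<Sum>(i,k)\<in>{(i,k). i+k \<le> n}. g i k)"
    by (rule sum.triangle_reindex_eq[symmetric])
  have S: "{(i,k). i+k \<le> n} = Sigma {..n} (\<lambda>i. {..n-i})" by auto
  show ?thesis unfolding L R T S by (simp add: sum.Sigma)
qed



definition eR :: "nat \<Rightarrow> 'b::comm_ring_1" where "eR i = (if i = 0 then 1 else 0)"

lemma GM_eR_left:
  assumes p: "prime p"
  shows "GM p eR b = b"
proof
  fix i
  have "GM p eR b i = (\<Sum>j\<in>{i}. eR (i - j) ^ (p ^ j) * b j)"
    unfolding GM_def
  proof (rule sum.mono_neutral_right)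
    show "\<forall>j\<in>{..i} - {i}. eR (i - j) ^ p ^ j * b j = 0"
    proof
      fix j assume "j \<in> {..i} - {i}"
      moreover have "0 < p ^ j" using prime_gt_0_nat[OF p] by simp
      ultimately show "eR (i - j) ^ p ^ j * b j = 0" by (auto simp: eR_def zero_power)
    qed
  qed auto
  then show "GM p eR b i = b i" by (simp add: eR_def)
qed

lemma GM_0: "GM p a b 0 = a 0 * b 0"
  by (simp add: GM_def)

lemma GM_split:
  assumes "0 < i"
  shows "GM p x u i = x i * u 0 + (\<Sum>j\<in>{1..<i}. x (i - j) ^ (p ^ j) * u j) + x 0 ^ (p ^ i) * u i"
proof -
  have "{..i} = insert 0 (insert i {1..<i})" using assms by auto
  then show ?thesis using assms unfolding GM_def by (simp add: add_ac)
qed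

lemma GM_split1:
  assumes "0 < i"
  shows "GM p x u i = x i * u 0 + (\<Sum>j\<in>{1..i}. x (i - j) ^ (p ^ j) * u j)"
proof -
  have "{..i} = insert 0 {1..i}" using assms by auto
  then show ?thesis using assms unfolding GM_def by (simp add: add_ac)
qed

primrec LA :: "nat \<Rightarrow> (nat \<Rightarrow> 'b::comm_ring_1) \<Rightarrow> nat \<Rightarrow> nat \<Rightarrow> 'b" where
  "LA p a 0 = (\<lambda>i. 1 + 1 - a 0)"
| "LA p a (Suc n) = (LA p a n)(Suc n :=
      - (\<Sum>j\<in>{1..Suc n}. LA p a n (Suc n - j) ^ (p ^ j) * a j) * (1 + 1 - a 0))"

definition linv :: "nat \<Rightarrow> (nat \<Rightarrow> 'b::comm_ring_1) \<Rightarrow> nat \<Rightarrow> 'b" where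
  "linv p a i = LA p a i i"

lemma LA_stable: "m \<le> n \<Longrightarrow> LA p a n m = LA p a m m"
proof (induction n)
  case 0 then show ?case by simp
next
  case (Suc n)
  show ?case
  proof (cases "m = Suc n")
    case False
    then have "m \<le> n" using Suc.prems by simp
    then show ?thesis using False Suc.IH by simp
  qed simp
qed

lemma linv_0: "linv p a 0 = 1 + 1 - a 0"
  by (simp add: linv_def)

lemma linv_Suc: "linv p a (Suc n) =
   - (\<Sum>j\<in>{1..Suc n}. linv p a (Suc n - j) ^ (p ^ j) * a j) * (1 + 1 - a 0)"
proof -
  have "(\<Sum>j\<in>{1..Suc n}. LA p a n (Suc n - j) ^ (p ^ j) * a j)
      = (\<Sum>j\<in>{1..Suc n}. linv p a (Suc n - j) ^ (p ^ j) * a j)"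
  proof (rule sum.cong[OF refl])
    fix j assume "j \<in> {1..Suc n}"
    then have "Suc n - j \<le> n" by auto
    then show "LA p a n (Suc n - j) ^ (p ^ j) * a j = linv p a (Suc n - j) ^ (p ^ j) * a j"
      unfolding linv_def by (subst LA_stable) auto
  qed
  then show ?thesis by (simp add: linv_def)
qed

lemma GM_linv:
  assumes "a 0 * (1 + 1 - a 0) = 1"
  shows "GM p (linv p a) a = eR"
proof
  fix i show "GM p (linv p a) a i = eR i"
  proof (cases i)
    case 0
    then show ?thesis using assms by (simp add: GM_0 linv_0 eR_def mult.commute)
  next
    case (Suc n)
    then have "GM p (linv p a) a i = linv p a i * a 0 + (\<Sum>j\<in>{1..i}. linv p a (i - j) ^ (p ^ j) * a j)"
      by (simp add: GM_split1)
    also have "\<dots> = 0"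
    proof -
      have c: "(1 + 1 - a 0) * a 0 = 1" using assms by (simp add: mult.commute)
      have "linv p a i * a 0 = - (\<Sum>j\<in>{1..i}. linv p a (i - j) ^ (p ^ j) * a j)"
        unfolding Suc linv_Suc by (simp only: mult.assoc c mult_1_right)
      then show ?thesis by simp
    qed
    finally show ?thesis using Suc by (simp add: eR_def)
  qed
qed

definition fR :: "'a::ring_1 cd \<Rightarrow> 'a" where "fR x = fst (rep x)"

lemma fR_simps: "fR (x + y) = fR x + fR y" "fR (x * y) = fR x * fR y" "fR 0 = 0" "fR 1 = 1"
  "fR (- x) = - fR x" "fR (x - y) = fR x - fR y"
  by (simp_all add: fR_def rep_simps pm_def)

lemma fR_power: "fR (x ^ n) = fR x ^ n"
  by (induction n) (simp_all add: fR_simps)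

lemma fR_sum: "fR (sum f S) = (\<Sum>i\<in>S. fR (f i))"
  by (induction S rule: infinite_finite_induct) (simp_all add: fR_simps)

lemma rep_of_nat: "rep (of_nat n :: 'a::ring_1 cd) = (of_nat n, 0)"
  by (induction n) (simp_all add: rep_simps)

lemma char_cd: "of_nat p = (0::'a::ring_1) \<Longrightarrow> of_nat p = (0::'a cd)"
  by (simp add: cd_eq_iff rep_of_nat rep_simps)

lemma eps_mult_zero: "fR x = 0 \<Longrightarrow> fR y = 0 \<Longrightarrow> x * y = 0"
  by (simp add: cd_eq_iff fR_def rep_simps pm_def)

lemma eps_pow_zero: "fR x = 0 \<Longrightarrow> 2 \<le> n \<Longrightarrow> x ^ n = 0"
proof -
  assume x: "fR x = 0" and n: "2 \<le> n"
  then obtain m where "n = Suc (Suc m)" by (metis add_2_eq_Suc le_Suc_ex)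
  then show ?thesis using eps_mult_zero[OF x x] by (simp add: mult.assoc[symmetric])
qed

lemma unit_pow_char:
  assumes x: "fR x = 1" and ch: "of_nat p = (0::'a::ring_1)" and i: "0 < i"
  shows "x ^ (p ^ i) = (1::'a cd)"
proof -
  define e where "e = x - 1"
  have e: "fR e = 0" using x by (simp add: e_def fR_simps)
  have ee: "e * e = 0" using eps_mult_zero[OF e e] .
  have pw: "(1 + e) ^ n = 1 + of_nat n * e" for n
  proof (induction n)
    case (Suc n)
    have "(1 + e) ^ Suc n = (1 + of_nat n * e) * (1 + e)" using Suc by (simp add: power_Suc2)
    also have "\<dots> = 1 + of_nat n * e + e + of_nat n * (e * e)" by (simp add: algebra_simps)
    finally show ?case by (simp add: ee algebra_simps)
  qed simp
  have "of_nat (p ^ i) = (0::'a cd)" using char_cd[OF ch] i by (simp add: of_nat_power zero_power)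
  then show ?thesis using pw[of "p ^ i"] by (simp add: e_def)
qed

lemma unit_inv:
  assumes x: "fR x = 1" shows "x * (1 + 1 - x) = (1::'a::ring_1 cd)"
proof -
  define e where "e = x - 1"
  have e: "fR e = 0" using x by (simp add: e_def fR_simps)
  have ee: "e * e = 0" using eps_mult_zero[OF e e] .
  have "x = 1 + e" by (simp add: e_def)
  then have "x * (1 + 1 - x) = (1 + e) * (1 - e)" by simp
  also have "\<dots> = 1 - e * e" by (simp add: algebra_simps)
  finally show ?thesis by (simp add: ee)
qed



lemma hdeg_0[simp]: "hdeg p 0 = 0" by (simp add: hdeg_def)

lemma hdeg_add:
  assumes "j \<le> i"
  shows "int p ^ j * hdeg p (i - j) + hdeg p j = hdeg p i"
proof -
  have e: "int p ^ j * int p ^ (i - j) = int p ^ i" using assms by (simp flip: power_add)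
  show ?thesis
  proof (cases "p = 2")
    case True
    then have "(2::int) ^ j * 2 ^ (i - j) = 2 ^ i" using e by simp
    then show ?thesis using True by (simp add: hdeg_def algebra_simps)
  next
    case False
    then show ?thesis using e by (simp add: hdeg_def algebra_simps)
  qed
qed

lemma hdeg_good: "even (hdeg p i) \<or> p = 2" by (simp add: hdeg_def)

lemma rep_sum: "rep (sum f S) = (\<Sum>i\<in>S. fst (rep (f i)), \<Sum>i\<in>S. snd (rep (f i)))"
  by (induction S rule: infinite_finite_induct) (simp_all add: rep_simps)

lemma fR_numeral[simp]: "fR (numeral n :: 'a::ring_1 cd) = numeral n"
proof -
  have "fR (of_nat (numeral n) :: 'a cd) = of_nat (numeral n)" by (simp only: fR_def rep_of_nat fst_conv)
  then show ?thesis by simp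
qed

lemma rep_abs: "central (fst x) \<Longrightarrow> rep (abs x) = x"
  by (simp add: abs_inverse)

locale gca =
  fixes p :: nat and A :: "int \<Rightarrow> 'a::ring_1 set"
  assumes prime: "prime p" and G: "graded_comm_Fp_alg p A"
begin

lemmas Gd = G[unfolded graded_comm_Fp_alg_def]
lemma G1: "\<forall>n. 0 \<in> A n \<and> (\<forall>x\<in>A n. \<forall>y\<in>A n. x + y \<in> A n) \<and> (\<forall>x\<in>A n. - x \<in> A n)"
  using Gd by (rule conjunct1)
lemma A_1: "1 \<in> A 0" using Gd by (rule conjunct1[OF conjunct2])
lemma G3: "\<forall>m n. \<forall>x\<in>A m. \<forall>y\<in>A n. x * y \<in> A (m + n)"
  using Gd by (rule conjunct1[OF conjunct2[OF conjunct2]])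
lemma A_decomp: "\<exists>F f. finite F \<and> (\<forall>n\<in>F. f n \<in> A n) \<and> x = sum f F"
proof -
  have "\<forall>x. \<exists>F f. finite F \<and> (\<forall>n\<in>F. f n \<in> A n) \<and> x = sum f F"
    using Gd by (rule conjunct1[OF conjunct2[OF conjunct2[OF conjunct2]]])
  then show ?thesis by (rule spec)
qed
lemma G6: "\<forall>m n. \<forall>x\<in>A m. \<forall>y\<in>A n. x * y = (if even (m * n) then y * x else - (y * x))"
  using Gd by (rule conjunct1[OF conjunct2[OF conjunct2[OF conjunct2[OF conjunct2[OF conjunct2]]]]])
lemma charp: "of_nat p = (0::'a)"
  using Gd by (rule conjunct2[OF conjunct2[OF conjunct2[OF conjunct2[OF conjunct2[OF conjunct2]]]]])
lemma A_0: "0 \<in> A n" using spec[OF G1, of n] by (rule conjunct1)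
lemma A_add: "x \<in> A n \<Longrightarrow> y \<in> A n \<Longrightarrow> x + y \<in> A n"
proof -
  assume x: "x \<in> A n" and y: "y \<in> A n"
  have h: "\<forall>x\<in>A n. \<forall>y\<in>A n. x + y \<in> A n" using spec[OF G1, of n] by (rule conjunct1[OF conjunct2])
  show ?thesis by (rule bspec[OF bspec[OF h x] y])
qed
lemma A_uminus: "x \<in> A n \<Longrightarrow> - x \<in> A n"
proof -
  assume x: "x \<in> A n"
  have h: "\<forall>x\<in>A n. - x \<in> A n" using spec[OF G1, of n] by (rule conjunct2[OF conjunct2])
  show ?thesis by (rule bspec[OF h x])
qed
lemma A_diff: "x \<in> A n \<Longrightarrow> y \<in> A n \<Longrightarrow> x - y \<in> A n"
  unfolding diff_conv_add_uminus by (rule A_add, assumption, rule A_uminus)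
lemma A_mult: "x \<in> A m \<Longrightarrow> y \<in> A n \<Longrightarrow> m + n = k \<Longrightarrow> x * y \<in> A k"
proof -
  assume "x \<in> A m" "y \<in> A n" "m + n = k"
  moreover have "x * y \<in> A (m + n)" using bspec[OF bspec[OF spec[OF spec[OF G3, of m], of n] \<open>x \<in> A m\<close>] \<open>y \<in> A n\<close>] .
  ultimately show ?thesis by simp
qed
lemma A_sign: "x \<in> A m \<Longrightarrow> y \<in> A n \<Longrightarrow> x * y = (if even (m * n) then y * x else - (y * x))"
  by (rule bspec[OF bspec[OF spec[OF spec[OF G6, of m], of n]]])

lemma char2: "p = 2 \<Longrightarrow> - (z::'a) = z"
proof -
  assume "p = 2"
  then have "(1 + 1 :: 'a) = 0" using charp by simp
  then have "(1 + 1) * z = 0" by simp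
  then have "z + z = 0" by (metis distrib_right mult_1)
  then show "- z = z" by (simp add: add_eq_0_iff)
qed

lemma central_hom:
  assumes x: "x \<in> A m" and g: "even m \<or> p = 2"
  shows "central x"
  unfolding central_def
proof
  fix y
  obtain F f where F: "finite F" "\<forall>n\<in>F. f n \<in> A n" "y = sum f F" using A_decomp by blast
  have "x * y = (\<Sum>n\<in>F. x * f n)" using F by (simp add: sum_distrib_left)
  also have "\<dots> = (\<Sum>n\<in>F. f n * x)"
  proof (rule sum.cong[OF refl])
    fix n assume "n \<in> F"
    then have "x * f n = (if even (m * n) then f n * x else - (f n * x))" using A_sign[OF x] F by blast
    then show "x * f n = f n * x" using g char2 by auto
  qed
  also have "\<dots> = y * x" using F by (simp add: sum_distrib_right)
  finally show "x * y = y * x" .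
qed

lemma A_sum: "(\<And>i. i \<in> S \<Longrightarrow> f i \<in> A n) \<Longrightarrow> sum f S \<in> A n"
proof (induction S rule: infinite_finite_induct)
  case (insert x F) then show ?case by (simp add: A_add)
qed (simp_all add: A_0)

lemma A_power: assumes x: "x \<in> A m" shows "x ^ k \<in> A (int k * m)"
proof (induction k)
  case 0 then show ?case by (simp add: A_1)
next
  case (Suc k)
  have "x * x ^ k \<in> A (int (Suc k) * m)" by (rule A_mult[OF x Suc.IH]) (simp add: algebra_simps)
  then show ?case by simp
qed

lemma eps_mult_pm: "even e \<or> p = 2 \<Longrightarrow> eps_mult e (x::'a \<times> 'a) y = pm x y"
proof -
  assume h: "even e \<or> p = 2"
  show ?thesis
  proof (cases "even e")
    case False
    then have "p = 2" using h by simp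
    then have "- (snd x * fst y) = snd x * fst y" by (rule char2)
    then show ?thesis using False by (simp add: eps_mult_def pm_def)
  qed (simp add: eps_mult_def pm_def)
qed

definition Rh :: "int \<Rightarrow> 'a cd \<Rightarrow> bool" where "Rh d r \<longleftrightarrow> ext_hom p A d (rep r)"

lemma Rh_0: "Rh d 0" by (simp add: Rh_def ext_hom_def rep_simps A_0)
lemma Rh_1: "Rh 0 1" by (simp add: Rh_def ext_hom_def rep_simps A_0 A_1)
lemma Rh_add: "Rh d x \<Longrightarrow> Rh d y \<Longrightarrow> Rh d (x + y)"
  by (auto simp: Rh_def ext_hom_def rep_simps A_add split: if_splits)
lemma Rh_uminus: "Rh d x \<Longrightarrow> Rh d (- x)"
  by (auto simp: Rh_def ext_hom_def rep_simps A_uminus split: if_splits)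
lemma Rh_diff: "Rh d x \<Longrightarrow> Rh d y \<Longrightarrow> Rh d (x - y)"
  by (auto simp: Rh_def ext_hom_def rep_simps A_diff split: if_splits)
lemma Rh_mult: "Rh d x \<Longrightarrow> Rh e y \<Longrightarrow> d + e = k \<Longrightarrow> Rh k (x * y)"
proof -
  assume x: "Rh d x" and y: "Rh e y" and k: "d + e = k"
  have f: "fst (rep x) \<in> A d" "fst (rep y) \<in> A e" using x y by (auto simp: Rh_def ext_hom_def)
  have fm: "fst (rep (x * y)) \<in> A k" unfolding rep_simps pm_def fst_conv by (rule A_mult[OF f k])
  show ?thesis
  proof (cases "p = 2")
    case True
    then have "snd (rep x) = 0" "snd (rep y) = 0" using x y unfolding Rh_def ext_hom_def by auto
    then have "snd (rep (x * y)) = 0" by (simp add: rep_simps pm_def)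
    then show ?thesis unfolding Rh_def ext_hom_def using fm True by simp
  next
    case False
    then have s: "snd (rep x) \<in> A (d + 1)" "snd (rep y) \<in> A (e + 1)"
      using x y by (auto simp: Rh_def ext_hom_def)
    have m1: "fst (rep x) * snd (rep y) \<in> A (k + 1)" by (rule A_mult[OF f(1) s(2)]) (use k in simp)
    have m2: "snd (rep x) * fst (rep y) \<in> A (k + 1)" by (rule A_mult[OF s(1) f(2)]) (use k in simp)
    have "snd (rep (x * y)) \<in> A (k + 1)" unfolding rep_simps pm_def snd_conv
      by (rule A_add[OF m1 m2])
    then show ?thesis unfolding Rh_def ext_hom_def using fm False by simp
  qed
qed
lemma Rh_sum: "(\<And>i. i \<in> S \<Longrightarrow> Rh d (f i)) \<Longrightarrow> Rh d (sum f S)"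
proof (induction S rule: infinite_finite_induct)
  case (insert x F) then show ?case by (simp add: Rh_add)
qed (simp_all add: Rh_0)
lemma Rh_power: assumes x: "Rh d x" shows "Rh (int n * d) (x ^ n)"
proof (induction n)
  case 0 then show ?case by (simp add: Rh_1)
next
  case (Suc n)
  have "Rh (int (Suc n) * d) (x * x ^ n)" by (rule Rh_mult[OF x Suc.IH]) (simp add: algebra_simps)
  then show ?case by simp
qed

lemma Rh_term: "Rh (hdeg p (i - j)) x \<Longrightarrow> Rh (hdeg p j) y \<Longrightarrow> j \<le> i \<Longrightarrow> Rh (hdeg p i) (x ^ (p ^ j) * y)"
  by (rule Rh_mult[OF Rh_power]) (auto simp: hdeg_add)

lemma Rh_GM: "(\<And>i. Rh (hdeg p i) (a i)) \<Longrightarrow> (\<And>i. Rh (hdeg p i) (b i)) \<Longrightarrow> Rh (hdeg p i) (GM p a b i)"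
  unfolding GM_def by (rule Rh_sum) (simp add: Rh_term)

lemma eps_pow_rep: "central (fst (x::'a \<times> 'a)) \<Longrightarrow> even e \<or> p = 2 \<Longrightarrow> eps_pow e x n = rep (abs x ^ n)"
proof (induction n)
  case 0 then show ?case by (simp add: rep_simps)
next
  case (Suc n)
  have "eps_pow e x (Suc n) = pm (rep (abs x ^ n)) x" using Suc by (simp add: eps_mult_pm)
  also have "\<dots> = rep (abs x ^ n * abs x)" using Suc.prems by (simp add: rep_simps rep_abs)
  also have "\<dots> = rep (abs x ^ Suc n)" by (metis power_Suc2)
  finally show ?case .
qed

definition tr :: "(nat \<Rightarrow> 'a \<times> 'a) \<Rightarrow> nat \<Rightarrow> 'a cd" where "tr \<alpha> = (\<lambda>i. abs (\<alpha> i))"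

lemma carrier_central: "\<alpha> \<in> Gcarrier p A \<Longrightarrow> central (fst (\<alpha> i))"
  by (rule central_hom[of _ "hdeg p i"]) (auto simp: Gcarrier_def ext_hom_def hdeg_good)

lemma rep_tr: "\<alpha> \<in> Gcarrier p A \<Longrightarrow> rep (tr \<alpha> i) = \<alpha> i"
  by (simp add: tr_def rep_abs carrier_central)

lemma tr_Rh: "\<alpha> \<in> Gcarrier p A \<Longrightarrow> Rh (hdeg p i) (tr \<alpha> i)"
  by (simp add: Rh_def rep_tr) (simp add: Gcarrier_def)

lemma tr_fR0: "\<alpha> \<in> Gcarrier p A \<Longrightarrow> fR (tr \<alpha> 0) = 1"
  by (simp add: fR_def rep_tr) (simp add: Gcarrier_def)

lemma carrier_rep: "(\<And>i. Rh (hdeg p i) (a i)) \<Longrightarrow> fR (a 0) = 1 \<Longrightarrow> (\<lambda>i. rep (a i)) \<in> Gcarrier p A"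
  by (auto simp: Gcarrier_def Rh_def fR_def)

lemma tr_rep: "tr (\<lambda>i. rep (a i)) = a"
  by (simp add: tr_def rep_inverse)

lemma tr_eq: "\<alpha> \<in> Gcarrier p A \<Longrightarrow> \<beta> \<in> Gcarrier p A \<Longrightarrow> \<alpha> i = \<beta> i \<longleftrightarrow> tr \<alpha> i = tr \<beta> i"
proof
  assume "\<alpha> \<in> Gcarrier p A" "\<beta> \<in> Gcarrier p A"
  show "\<alpha> i = \<beta> i \<Longrightarrow> tr \<alpha> i = tr \<beta> i" by (simp add: tr_def)
  assume "tr \<alpha> i = tr \<beta> i"
  then have "rep (tr \<alpha> i) = rep (tr \<beta> i)" by simp
  then show "\<alpha> i = \<beta> i" using rep_tr \<open>\<alpha> \<in> Gcarrier p A\<close> \<open>\<beta> \<in> Gcarrier p A\<close> by simp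
qed

lemma Gmult_GM:
  assumes a: "\<alpha> \<in> Gcarrier p A" and b: "\<beta> \<in> Gcarrier p A"
  shows "Gmult p \<alpha> \<beta> = (\<lambda>i. rep (GM p (tr \<alpha>) (tr \<beta>) i))"
proof
  fix i
  have t: "eps_mult (hdeg p j) (eps_pow (hdeg p (i - j)) (\<alpha> (i - j)) (p ^ j)) (\<beta> j)
      = rep (tr \<alpha> (i - j) ^ (p ^ j) * tr \<beta> j)" for j
    using carrier_central[OF a] carrier_central[OF b]
    by (simp add: eps_mult_pm hdeg_good eps_pow_rep rep_simps rep_abs tr_def)
  show "Gmult p \<alpha> \<beta> i = rep (GM p (tr \<alpha>) (tr \<beta>) i)"
    unfolding Gmult_def Let_def t GM_def rep_sum by simp
qed

lemma tr_Gmult: "\<alpha> \<in> Gcarrier p A \<Longrightarrow> \<beta> \<in> Gcarrier p A \<Longrightarrow> tr (Gmult p \<alpha> \<beta>) = GM p (tr \<alpha>) (tr \<beta>)"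
  by (simp add: Gmult_GM tr_rep)

lemma tr_Gone: "tr Gone = eR"
  by (auto simp: tr_def Gone_def eR_def one_cd_def zero_cd_def)

lemma Gone_carrier: "Gone \<in> Gcarrier p A"
  by (auto simp: Gcarrier_def Gone_def ext_hom_def A_0 A_1)

lemma Gmult_closed: "\<alpha> \<in> Gcarrier p A \<Longrightarrow> \<beta> \<in> Gcarrier p A \<Longrightarrow> Gmult p \<alpha> \<beta> \<in> Gcarrier p A"
  unfolding Gmult_GM
  by (rule carrier_rep) (auto intro!: Rh_GM tr_Rh simp: GM_0 fR_simps tr_fR0)

lemma linv_Rh:
  assumes a: "\<And>i. Rh (hdeg p i) (a i)"
  shows "Rh (hdeg p i) (linv p a i)"
proof (induction i rule: less_induct)
  case (less i)
  have a0: "Rh 0 (a 0)" using a[of 0] by simp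
  have inv0: "Rh 0 (1 + 1 - a 0)" by (rule Rh_diff[OF Rh_add[OF Rh_1 Rh_1] a0])
  show ?case
  proof (cases i)
    case 0 then show ?thesis using inv0 by (simp add: linv_0)
  next
    case (Suc n)
    have "Rh (hdeg p i) (\<Sum>j\<in>{1..Suc n}. linv p a (Suc n - j) ^ (p ^ j) * a j)"
      by (rule Rh_sum, rule Rh_term) (use less Suc a in auto)
    then have "Rh (hdeg p i) (- (\<Sum>j\<in>{1..Suc n}. linv p a (Suc n - j) ^ (p ^ j) * a j) * (1 + 1 - a 0))"
      by (intro Rh_mult[OF Rh_uminus inv0]) simp_all
    then show ?thesis unfolding Suc linv_Suc .
  qed
qed

lemma group_Gp: "group (Gp p A)"
proof (rule groupI)
  fix x y z
  assume x: "x \<in> carrier (Gp p A)" and y: "y \<in> carrier (Gp p A)" and z: "z \<in> carrier (Gp p A)"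
  then have x': "x \<in> Gcarrier p A" and y': "y \<in> Gcarrier p A" and z': "z \<in> Gcarrier p A"
    by (simp_all add: Gp_def)
  have xy: "Gmult p x y \<in> Gcarrier p A" and yz: "Gmult p y z \<in> Gcarrier p A"
    using x' y' z' by (simp_all add: Gmult_closed)
  have "tr (Gmult p (Gmult p x y) z) = tr (Gmult p x (Gmult p y z))"
    using x' y' z' xy yz by (simp add: tr_Gmult GM_assoc[OF prime char_cd[OF charp]] fun_eq_iff)
  then have "Gmult p (Gmult p x y) z = Gmult p x (Gmult p y z)"
    using Gmult_closed[OF xy z'] Gmult_closed[OF x' yz] by (metis rep_tr ext)
  then show "x \<otimes>\<^bsub>Gp p A\<^esub> y \<otimes>\<^bsub>Gp p A\<^esub> z = x \<otimes>\<^bsub>Gp p A\<^esub> (y \<otimes>\<^bsub>Gp p A\<^esub> z)"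
    by (simp add: Gp_def)
next
  fix x y
  assume "x \<in> carrier (Gp p A)" "y \<in> carrier (Gp p A)"
  then show "x \<otimes>\<^bsub>Gp p A\<^esub> y \<in> carrier (Gp p A)" by (simp add: Gp_def Gmult_closed)
next
  show "\<one>\<^bsub>Gp p A\<^esub> \<in> carrier (Gp p A)" by (simp add: Gp_def Gone_carrier)
next
  fix x assume "x \<in> carrier (Gp p A)"
  then have x: "x \<in> Gcarrier p A" by (simp add: Gp_def)
  have "tr (Gmult p Gone x) = tr x" using x Gone_carrier by (simp add: tr_Gmult tr_Gone GM_eR_left[OF prime])
  then have "Gmult p Gone x = x" using Gmult_closed[OF Gone_carrier x] x by (metis rep_tr ext)
  then show "\<one>\<^bsub>Gp p A\<^esub> \<otimes>\<^bsub>Gp p A\<^esub> x = x" by (simp add: Gp_def)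
next
  fix x assume "x \<in> carrier (Gp p A)"
  then have x: "x \<in> Gcarrier p A" by (simp add: Gp_def)
  define y where "y = (\<lambda>i. rep (linv p (tr x) i))"
  have y: "y \<in> Gcarrier p A" unfolding y_def
    by (rule carrier_rep) (auto intro: linv_Rh tr_Rh[OF x] simp: linv_0 fR_simps tr_fR0[OF x])
  have "tr (Gmult p y x) = tr Gone"
    using x y by (simp add: tr_Gmult tr_Gone y_def tr_rep GM_linv[of "tr x", OF unit_inv[OF tr_fR0[OF x]]])
  then have "Gmult p y x = Gone" using Gmult_closed[OF y x] Gone_carrier by (metis rep_tr ext)
  then show "\<exists>y\<in>carrier (Gp p A). y \<otimes>\<^bsub>Gp p A\<^esub> x = \<one>\<^bsub>Gp p A\<^esub>" using y by (auto simp: Gp_def)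
qed

end


definition SR :: "nat \<Rightarrow> (nat \<Rightarrow> 'b::comm_ring_1) \<Rightarrow> bool" where
  "SR k a \<longleftrightarrow> a 0 = 1 \<and> (\<forall>i. 1 \<le> i \<and> i \<le> k \<longrightarrow> a i = 0)"

context gca
begin

lemma ppos: "0 < p ^ j" using prime_gt_0_nat[OF prime] by simp

lemma GM_low:
  fixes x u :: "nat \<Rightarrow> 'a cd"
  assumes x0: "fR (x 0) = 1" and u0: "u 0 = 1" and uj: "\<And>j. 1 \<le> j \<Longrightarrow> j < i \<Longrightarrow> u j = 0"
    and i: "0 < i"
  shows "GM p x u i = x i + u i"
proof -
  have M: "(\<Sum>j\<in>{1..<i}. x (i - j) ^ (p ^ j) * u j) = 0" by (rule sum.neutral) (auto simp: uj)
  have "x 0 ^ (p ^ i) = 1" by (rule unit_pow_char[OF x0 charp i])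
  then show ?thesis using GM_split[OF i, of p x u] M u0 by simp
qed

lemma L_R:
  fixes x y u :: "nat \<Rightarrow> 'a cd"
  assumes x0: "fR (x 0) = 1" and y: "\<And>i. y i = GM p x u i" and agree: "\<And>i. i \<le> k \<Longrightarrow> x i = y i"
  shows "SR k u" and "fR (x (k + 1)) = fR (y (k + 1)) \<Longrightarrow> fR (u (k + 1)) = 0"
proof -
  have c: "(1 + 1 - x 0) * x 0 = 1" using unit_inv[OF x0] by (simp add: mult.commute)
  have eq: "x 0 * u 0 = x 0" using y[of 0] agree[of 0] by (simp add: GM_0)
  have "u 0 = ((1 + 1 - x 0) * x 0) * u 0" using c by simp
  also have "\<dots> = (1 + 1 - x 0) * (x 0 * u 0)" by (simp only: mult.assoc)
  also have "\<dots> = (1 + 1 - x 0) * x 0" by (simp only: eq)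
  also have "\<dots> = 1" by (rule c)
  finally have u0: "u 0 = 1" .
  have low: "i \<le> k \<Longrightarrow> 1 \<le> i \<Longrightarrow> u i = 0" for i
  proof (induction i rule: less_induct)
    case (less i)
    have "GM p x u i = x i + u i" by (rule GM_low[of x u, OF x0 u0]) (use less in auto)
    moreover have "GM p x u i = x i" using y[of i] agree[of i] less.prems by simp
    ultimately show ?case by simp
  qed
  show "SR k u" using u0 low by (simp add: SR_def)
  show "fR (u (k + 1)) = 0" if h: "fR (x (k + 1)) = fR (y (k + 1))"
  proof -
    have "GM p x u (k + 1) = x (k + 1) + u (k + 1)" by (rule GM_low[of x u, OF x0 u0]) (use low in auto)
    then show ?thesis using y[of "k + 1"] h by (simp add: fR_simps)
  qed
qed

lemma Gp_simps: "carrier (Gp p A) = Gcarrier p A" "x \<otimes>\<^bsub>Gp p A\<^esub> y = Gmult p x y" "\<one>\<^bsub>Gp p A\<^esub> = Gone"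
  by (simp_all add: Gp_def)

lemma tr_val: "\<alpha> \<in> Gcarrier p A \<Longrightarrow> \<alpha> i = rep r \<longleftrightarrow> tr \<alpha> i = r"
  by (metis rep_tr rep_inverse)

lemma Gsub_iff: "\<alpha> \<in> Gsub p A k \<longleftrightarrow> \<alpha> \<in> Gcarrier p A \<and> SR k (tr \<alpha>)"
proof (cases "\<alpha> \<in> Gcarrier p A")
  case True
  have a: "\<alpha> 0 = (1, 0) \<longleftrightarrow> tr \<alpha> 0 = 1" using tr_val[OF True, of 0 1] by (simp add: rep_simps)
  have b: "\<alpha> i = (0, 0) \<longleftrightarrow> tr \<alpha> i = 0" for i using tr_val[OF True, of i 0] by (simp add: rep_simps)
  show ?thesis using True a b unfolding Gsub_def SR_def by auto
qed (simp add: Gsub_def)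

lemma Gsub_half_iff: "\<alpha> \<in> Gsub_half p A k \<longleftrightarrow> \<alpha> \<in> Gcarrier p A \<and> SR k (tr \<alpha>) \<and> fR (tr \<alpha> (k + 1)) = 0"
proof (cases "\<alpha> \<in> Gcarrier p A")
  case True
  have "fst (\<alpha> (k + 1)) = fR (tr \<alpha> (k + 1))" using True by (simp add: fR_def rep_tr)
  then show ?thesis unfolding Gsub_half_def Gsub_iff by auto
qed (simp add: Gsub_half_def Gsub_def)

lemma L_G:
  assumes x: "x \<in> Gcarrier p A" and y: "y \<in> Gcarrier p A" and agree: "\<And>i. i \<le> k \<Longrightarrow> tr x i = tr y i"
  shows "inv\<^bsub>Gp p A\<^esub> x \<otimes>\<^bsub>Gp p A\<^esub> y \<in> Gsub p A k"
    and "fR (tr x (k + 1)) = fR (tr y (k + 1)) \<Longrightarrow> inv\<^bsub>Gp p A\<^esub> x \<otimes>\<^bsub>Gp p A\<^esub> y \<in> Gsub_half p A k"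
proof -
  interpret G: group "Gp p A" by (rule group_Gp)
  define u where "u = inv\<^bsub>Gp p A\<^esub> x \<otimes>\<^bsub>Gp p A\<^esub> y"
  have xc: "x \<in> carrier (Gp p A)" and yc: "y \<in> carrier (Gp p A)" using x y by (simp_all add: Gp_simps)
  have uc: "u \<in> carrier (Gp p A)" unfolding u_def using xc yc by simp
  then have u: "u \<in> Gcarrier p A" by (simp add: Gp_simps)
  have "x \<otimes>\<^bsub>Gp p A\<^esub> u = y" unfolding u_def using xc yc by (simp add: G.m_assoc[symmetric])
  then have "Gmult p x u = y" by (simp add: Gp_simps)
  then have tu: "tr y = GM p (tr x) (tr u)" using tr_Gmult[OF x u] by simp
  have LR: "SR k (tr u)" "fR (tr x (k + 1)) = fR (tr y (k + 1)) \<Longrightarrow> fR (tr u (k + 1)) = 0"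
    by (rule L_R[of "tr x" "tr y" "tr u", OF tr_fR0[OF x]], simp add: tu, rule agree, simp)+
  show "inv\<^bsub>Gp p A\<^esub> x \<otimes>\<^bsub>Gp p A\<^esub> y \<in> Gsub p A k"
    using LR u unfolding u_def[symmetric] Gsub_iff by simp
  show "inv\<^bsub>Gp p A\<^esub> x \<otimes>\<^bsub>Gp p A\<^esub> y \<in> Gsub_half p A k" if "fR (tr x (k + 1)) = fR (tr y (k + 1))"
    using LR u that unfolding u_def[symmetric] Gsub_half_iff by simp
qed

end


context gca
begin

lemma SR_GM:
  fixes a b :: "nat \<Rightarrow> 'a cd"
  assumes a: "SR k a" and b: "SR k b"
  shows "SR k (GM p a b)"
    and "fR (a (k + 1)) = 0 \<Longrightarrow> fR (b (k + 1)) = 0 \<Longrightarrow> fR (GM p a b (k + 1)) = 0"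
proof -
  have a0: "fR (a 0) = 1" using a by (simp add: SR_def fR_simps)
  have b0: "b 0 = 1" using b by (simp add: SR_def)
  have "GM p a b i = 0" if "1 \<le> i" "i \<le> k" for i
  proof -
    have "GM p a b i = a i + b i" by (rule GM_low[of a b, OF a0 b0]) (use b that in \<open>auto simp: SR_def\<close>)
    then show ?thesis using a b that by (simp add: SR_def)
  qed
  then show "SR k (GM p a b)" using a b by (simp add: SR_def GM_0)
  show "fR (GM p a b (k + 1)) = 0" if "fR (a (k + 1)) = 0" "fR (b (k + 1)) = 0"
  proof -
    have "GM p a b (k + 1) = a (k + 1) + b (k + 1)" by (rule GM_low[of a b, OF a0 b0]) (use b in \<open>auto simp: SR_def\<close>)
    then show ?thesis using that by (simp add: fR_simps)
  qed
qed

lemma tr_Gone_SR: "SR k (tr Gone)" by (simp add: tr_Gone SR_def eR_def)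

lemma sub_Gsub: "subgroup (Gsub p A k) (Gp p A)"
proof -
  interpret G: group "Gp p A" by (rule group_Gp)
  show ?thesis
  proof (rule G.subgroupI)
    show "Gsub p A k \<subseteq> carrier (Gp p A)" by (auto simp: Gp_simps Gsub_def)
    show "Gsub p A k \<noteq> {}" using Gone_carrier tr_Gone_SR Gsub_iff by blast
  next
    fix a assume a: "a \<in> Gsub p A k"
    then have ac: "a \<in> Gcarrier p A" and sa: "SR k (tr a)" by (simp_all add: Gsub_iff)
    have "inv\<^bsub>Gp p A\<^esub> a \<otimes>\<^bsub>Gp p A\<^esub> Gone \<in> Gsub p A k"
      by (rule L_G(1)[OF ac Gone_carrier]) (use sa in \<open>auto simp: SR_def tr_Gone eR_def\<close>)
    then show "inv\<^bsub>Gp p A\<^esub> a \<in> Gsub p A k" using ac by (simp add: Gp_simps[symmetric])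
  next
    fix a b assume a: "a \<in> Gsub p A k" and b: "b \<in> Gsub p A k"
    then have ac: "a \<in> Gcarrier p A" and sa: "SR k (tr a)" and bc: "b \<in> Gcarrier p A" and sb: "SR k (tr b)"
      by (simp_all add: Gsub_iff)
    show "a \<otimes>\<^bsub>Gp p A\<^esub> b \<in> Gsub p A k"
      using SR_GM(1)[OF sa sb] Gmult_closed[OF ac bc] by (simp add: Gp_simps Gsub_iff tr_Gmult[OF ac bc])
  qed
qed

lemma sub_half: "subgroup (Gsub_half p A k) (Gp p A)"
proof -
  interpret G: group "Gp p A" by (rule group_Gp)
  show ?thesis
  proof (rule G.subgroupI)
    show "Gsub_half p A k \<subseteq> carrier (Gp p A)" by (auto simp: Gp_simps Gsub_half_def Gsub_def)
    have "fR (tr Gone (k + 1)) = 0" by (simp add: tr_Gone eR_def fR_simps)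
    then show "Gsub_half p A k \<noteq> {}" using Gone_carrier tr_Gone_SR Gsub_half_iff by blast
  next
    fix a assume a: "a \<in> Gsub_half p A k"
    then have ac: "a \<in> Gcarrier p A" and sa: "SR k (tr a)" and fa: "fR (tr a (k + 1)) = 0"
      by (simp_all add: Gsub_half_iff)
    have "inv\<^bsub>Gp p A\<^esub> a \<otimes>\<^bsub>Gp p A\<^esub> Gone \<in> Gsub_half p A k"
      by (rule L_G(2)[OF ac Gone_carrier]) (use sa fa in \<open>auto simp: SR_def tr_Gone eR_def fR_simps\<close>)
    then show "inv\<^bsub>Gp p A\<^esub> a \<in> Gsub_half p A k" using ac by (simp add: Gp_simps[symmetric])
  next
    fix a b assume a: "a \<in> Gsub_half p A k" and b: "b \<in> Gsub_half p A k"
    then have ac: "a \<in> Gcarrier p A" and sa: "SR k (tr a)" and bc: "b \<in> Gcarrier p A" and sb: "SR k (tr b)"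
      and fa: "fR (tr a (k + 1)) = 0" and fb: "fR (tr b (k + 1)) = 0"
      by (simp_all add: Gsub_half_iff)
    show "a \<otimes>\<^bsub>Gp p A\<^esub> b \<in> Gsub_half p A k"
      using SR_GM[OF sa sb] fa fb Gmult_closed[OF ac bc]
      by (simp add: Gp_simps Gsub_half_iff tr_Gmult[OF ac bc])
  qed
qed

lemma comm_G:
  assumes h: "h \<in> Gcarrier p A" and g: "g \<in> Gcarrier p A"
    and agree: "\<And>i. i \<le> k \<Longrightarrow> GM p (tr g) (tr h) i = GM p (tr h) (tr g) i"
  shows "inv\<^bsub>Gp p A\<^esub> h \<otimes>\<^bsub>Gp p A\<^esub> inv\<^bsub>Gp p A\<^esub> g \<otimes>\<^bsub>Gp p A\<^esub> h \<otimes>\<^bsub>Gp p A\<^esub> g \<in> Gsub p A k"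
    and "fR (GM p (tr g) (tr h) (k + 1)) = fR (GM p (tr h) (tr g) (k + 1)) \<Longrightarrow>
      inv\<^bsub>Gp p A\<^esub> h \<otimes>\<^bsub>Gp p A\<^esub> inv\<^bsub>Gp p A\<^esub> g \<otimes>\<^bsub>Gp p A\<^esub> h \<otimes>\<^bsub>Gp p A\<^esub> g \<in> Gsub_half p A k"
proof -
  interpret G: group "Gp p A" by (rule group_Gp)
  have hc: "h \<in> carrier (Gp p A)" and gc: "g \<in> carrier (Gp p A)" using h g by (simp_all add: Gp_simps)
  have e: "inv\<^bsub>Gp p A\<^esub> h \<otimes>\<^bsub>Gp p A\<^esub> inv\<^bsub>Gp p A\<^esub> g \<otimes>\<^bsub>Gp p A\<^esub> h \<otimes>\<^bsub>Gp p A\<^esub> g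
     = inv\<^bsub>Gp p A\<^esub> (Gmult p g h) \<otimes>\<^bsub>Gp p A\<^esub> (Gmult p h g)"
    using hc gc by (simp add: G.inv_mult_group G.m_assoc Gp_simps[symmetric])
  have gh: "Gmult p g h \<in> Gcarrier p A" and hg: "Gmult p h g \<in> Gcarrier p A"
    using Gmult_closed h g by auto
  have t1: "tr (Gmult p g h) = GM p (tr g) (tr h)" and t2: "tr (Gmult p h g) = GM p (tr h) (tr g)"
    using tr_Gmult h g by auto
  show "inv\<^bsub>Gp p A\<^esub> h \<otimes>\<^bsub>Gp p A\<^esub> inv\<^bsub>Gp p A\<^esub> g \<otimes>\<^bsub>Gp p A\<^esub> h \<otimes>\<^bsub>Gp p A\<^esub> g \<in> Gsub p A k"
    unfolding e by (rule L_G(1)[OF gh hg]) (simp add: t1 t2 agree)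
  show "inv\<^bsub>Gp p A\<^esub> h \<otimes>\<^bsub>Gp p A\<^esub> inv\<^bsub>Gp p A\<^esub> g \<otimes>\<^bsub>Gp p A\<^esub> h \<otimes>\<^bsub>Gp p A\<^esub> g \<in> Gsub_half p A k"
    if "fR (GM p (tr g) (tr h) (k + 1)) = fR (GM p (tr h) (tr g) (k + 1))"
    unfolding e by (rule L_G(2)[OF gh hg]) (simp add: t1 t2 agree, use that in \<open>simp add: t1 t2\<close>)
qed

lemma comm_incl:
  assumes T: "subgroup T (Gp p A)" and HK: "H \<subseteq> Gcarrier p A" "K \<subseteq> Gcarrier p A"
    and c: "\<And>h g. h \<in> H \<Longrightarrow> g \<in> K \<Longrightarrow>
       inv\<^bsub>Gp p A\<^esub> h \<otimes>\<^bsub>Gp p A\<^esub> inv\<^bsub>Gp p A\<^esub> g \<otimes>\<^bsub>Gp p A\<^esub> h \<otimes>\<^bsub>Gp p A\<^esub> g \<in> T"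
  shows "comm_subgroup (Gp p A) H K \<subseteq> T"
proof -
  interpret G: group "Gp p A" by (rule group_Gp)
  show ?thesis unfolding comm_subgroup_def
    by (rule G.generate_subgroup_incl[OF _ T]) (use c in blast)
qed

end


context gca
begin

lemma M0:
  fixes h g :: "nat \<Rightarrow> 'a cd"
  assumes "\<And>j. 1 \<le> j \<Longrightarrow> j < i \<Longrightarrow> g j = 0 \<or> h (i - j) = 0"
  shows "(\<Sum>j\<in>{1..<i}. h (i - j) ^ (p ^ j) * g j) = 0"
proof (rule sum.neutral, rule ballI)
  fix j assume "j \<in> {1..<i}"
  then have "g j = 0 \<or> h (i - j) = 0" using assms by auto
  moreover have "(0::'a cd) ^ (p ^ j) = 0" by (rule zero_power[OF ppos])
  ultimately show "h (i - j) ^ (p ^ j) * g j = 0" by auto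
qed

lemma fR_M0:
  fixes h g :: "nat \<Rightarrow> 'a cd"
  assumes "\<And>j. 1 \<le> j \<Longrightarrow> j < i \<Longrightarrow> fR (g j) = 0"
  shows "fR (\<Sum>j\<in>{1..<i}. h (i - j) ^ (p ^ j) * g j) = 0"
  unfolding fR_sum by (rule sum.neutral) (use assms in \<open>auto simp: fR_simps\<close>)

lemma C0: "GM p h g 0 = GM p g h 0" by (simp add: GM_0 mult.commute)

lemma C1:
  fixes h g :: "nat \<Rightarrow> 'a cd"
  assumes "fR (h 0) = 1" "fR (g 0) = 1"
  shows "fR (GM p h g 1) = fR (GM p g h 1)"
  using assms by (simp add: GM_split fR_simps fR_power add.commute)

lemma C2:
  fixes h g :: "nat \<Rightarrow> 'a cd"
  assumes h: "SR 0 h" "fR (h 1) = 0" and g: "SR 0 g" "fR (g 1) = 0" and i: "i \<le> 2"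
  shows "GM p h g i = GM p g h i"
proof -
  have p2: "2 \<le> p" using prime_ge_2_nat[OF prime] .
  have hp: "h 1 ^ p = 0" by (rule eps_pow_zero[OF h(2) p2])
  have gp: "g 1 ^ p = 0" by (rule eps_pow_zero[OF g(2) p2])
  have h0: "h 0 = 1" and g0: "g 0 = 1" using h g by (simp_all add: SR_def)
  have s1: "{1..<1::nat} = {}" and s2: "{1..<2::nat} = {1}" by auto
  have one: "GM p x y 1 = x 1 + y 1" if "x 0 = 1" "y 0 = 1" for x y :: "nat \<Rightarrow> 'a cd"
    using GM_split[of 1 p x y] that unfolding s1 by simp
  have two: "GM p x y 2 = x 2 + y 2" if "x 0 = 1" "y 0 = 1" "x 1 ^ p = 0" for x y :: "nat \<Rightarrow> 'a cd"
    using GM_split[of 2 p x y] that unfolding s2 by simp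
  have "i = 0 \<or> i = 1 \<or> i = 2" using i by auto
  then show ?thesis
  proof (elim disjE)
    assume "i = 0" then show ?thesis by (simp add: C0)
  next
    assume "i = 1" then show ?thesis using one[of h g, OF h0 g0] one[of g h, OF g0 h0] by (simp add: add.commute)
  next
    assume "i = 2" then show ?thesis using two[of h g, OF h0 g0 hp] two[of g h, OF g0 h0 gp] by (simp add: add.commute)
  qed
qed

lemma C3:
  fixes h g :: "nat \<Rightarrow> 'a cd"
  assumes k: "1 \<le> k" and h: "SR k h" and g: "SR k g" and i: "i \<le> k + 2"
  shows "GM p h g i = GM p g h i"
proof (cases "i = 0")
  case True then show ?thesis by (simp add: C0)
next
  case False
  then have i0: "0 < i" by simp
  have h0: "h 0 = 1" and g0: "g 0 = 1" using h g by (simp_all add: SR_def)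
  have m: "(\<Sum>j\<in>{1..<i}. x (i - j) ^ (p ^ j) * y j) = 0" if "SR k x" "SR k y" for x y :: "nat \<Rightarrow> 'a cd"
  proof (rule M0)
    fix j assume j: "1 \<le> j" "j < i"
    show "y j = 0 \<or> x (i - j) = 0"
    proof (cases "j \<le> k")
      case True then show ?thesis using that j by (simp add: SR_def)
    next
      case False
      then have "1 \<le> i - j" "i - j \<le> k" using j k i by auto
      then show ?thesis using that by (simp add: SR_def)
    qed
  qed
  show ?thesis using GM_split[OF i0, of p h g] GM_split[OF i0, of p g h] m[OF h g] m[OF g h] h0 g0
    by (simp add: add.commute)
qed

lemma C4:
  fixes h g :: "nat \<Rightarrow> 'a cd"
  assumes h: "SR k h" and g0: "fR (g 0) = 1"
  shows "i \<le> k \<Longrightarrow> GM p h g i = GM p g h i"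
    and "fR (GM p h g (k + 1)) = fR (GM p g h (k + 1))"
proof -
  have h0: "h 0 = 1" using h by (simp add: SR_def)
  have hz: "h j = 0" if "1 \<le> j" "j \<le> k" for j using h that by (simp add: SR_def)
  have mh: "(\<Sum>j\<in>{1..<i}. h (i - j) ^ (p ^ j) * g j) = 0" if "i \<le> k + 1" for i
    by (rule M0) (use that hz in auto)
  have mg: "(\<Sum>j\<in>{1..<i}. g (i - j) ^ (p ^ j) * h j) = 0" if "i \<le> k + 1" for i
    by (rule M0) (use that hz in auto)
  show "GM p h g i = GM p g h i" if i: "i \<le> k"
  proof (cases "i = 0")
    case True then show ?thesis by (simp add: C0)
  next
    case False
    then have i0: "0 < i" by simp
    show ?thesis using GM_split[OF i0, of p h g] GM_split[OF i0, of p g h] mh[of i] mg[of i] h0 hz[of i] i i0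
      by simp
  qed
  have k0: "0 < k + 1" by simp
  have u: "g 0 ^ (p ^ (k + 1)) = 1" by (rule unit_pow_char[OF g0 charp k0])
  show "fR (GM p h g (k + 1)) = fR (GM p g h (k + 1))"
    using GM_split[OF k0, of p h g] GM_split[OF k0, of p g h] mh[of "k + 1"] mg[of "k + 1"] h0 u g0
    by (simp add: fR_simps add.commute)
qed

lemma C5:
  fixes h g :: "nat \<Rightarrow> 'a cd"
  assumes h: "SR k h" and hk: "fR (h (k + 1)) = 0" and g0: "fR (g 0) = 1"
  shows "i \<le> k + 1 \<Longrightarrow> GM p h g i = GM p g h i"
    and "fR (GM p h g (k + 2)) = fR (GM p g h (k + 2))"
proof -
  have h0: "h 0 = 1" using h by (simp add: SR_def)
  have hz: "h j = 0" if "1 \<le> j" "j \<le> k" for j using h that by (simp add: SR_def)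
  have p2: "2 \<le> p" using prime_ge_2_nat[OF prime] .
  have k0: "0 < k + 1" by simp
  have u: "g 0 ^ (p ^ (k + 1)) = 1" by (rule unit_pow_char[OF g0 charp k0])
  show "GM p h g i = GM p g h i" if i: "i \<le> k + 1"
  proof (cases "i \<le> k")
    case True then show ?thesis using C4(1)[of k h g, OF h g0] by simp
  next
    case False
    then have ik: "i = k + 1" using i by simp
    have mh: "(\<Sum>j\<in>{1..<k+1}. h (k + 1 - j) ^ (p ^ j) * g j) = 0"
      by (rule M0) (use hz in auto)
    have mg: "(\<Sum>j\<in>{1..<k+1}. g (k + 1 - j) ^ (p ^ j) * h j) = 0"
      by (rule M0) (use hz in auto)
    have e: "fR (g 0 - 1) = 0" using g0 by (simp add: fR_simps)
    have "h (k + 1) * g 0 = h (k + 1) * (g 0 - 1) + h (k + 1)" by (simp add: algebra_simps)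
    also have "\<dots> = h (k + 1)" using eps_mult_zero[OF hk e] by simp
    finally have hg0: "h (k + 1) * g 0 = h (k + 1)" .
    show ?thesis unfolding ik
      using GM_split[OF k0, of p h g] GM_split[OF k0, of p g h] mh mg h0 u hg0
      by (simp add: add.commute)
  qed
  have k2: "0 < k + 2" by simp
  have u2: "g 0 ^ (p ^ (k + 2)) = 1" by (rule unit_pow_char[OF g0 charp k2])
  have mh: "(\<Sum>j\<in>{1..<k+2}. h (k + 2 - j) ^ (p ^ j) * g j) = 0"
  proof (rule sum.neutral, rule ballI)
    fix j assume "j \<in> {1..<k+2}"
    then have j: "1 \<le> j" "j < k + 2" by auto
    show "h (k + 2 - j) ^ (p ^ j) * g j = 0"
    proof (cases "j = 1")
      case True
      have "h (k + 1) ^ p = 0" by (rule eps_pow_zero[OF hk p2])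
      then show ?thesis using True by simp
    next
      case False
      then have "h (k + 2 - j) = 0" using j by (intro hz) auto
      moreover have "(0::'a cd) ^ (p ^ j) = 0" by (rule zero_power[OF ppos])
      ultimately show ?thesis by simp
    qed
  qed
  have fmg: "fR (\<Sum>j\<in>{1..<k+2}. g (k + 2 - j) ^ (p ^ j) * h j) = 0"
  proof (rule fR_M0)
    fix j assume j: "1 \<le> j" "j < k + 2"
    show "fR (h j) = 0"
    proof (cases "j = k + 1")
      case True then show ?thesis using hk by simp
    next
      case False then show ?thesis using j hz[of j] by (simp add: fR_simps)
    qed
  qed
  show "fR (GM p h g (k + 2)) = fR (GM p g h (k + 2))"
    using GM_split[OF k2, of p h g] GM_split[OF k2, of p g h] mh fmg h0 u2 g0
    by (simp add: fR_simps add.commute)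
qed

end

theorem proposition3p2:
  fixes p :: nat and A :: "int \<Rightarrow> 'a::ring_1 set"
  assumes "prime p" and "graded_comm_Fp_alg p A"
  shows "comm_subgroup (Gp p A) (Gcarrier p A) (Gcarrier p A) \<subseteq> Gsub_half p A 0
    \<and> comm_subgroup (Gp p A) (Gsub_half p A 0) (Gsub_half p A 0) \<subseteq> Gsub p A 2
    \<and> (\<forall>k\<ge>1. comm_subgroup (Gp p A) (Gsub p A k) (Gsub p A k) \<subseteq> Gsub p A (k + 2))
    \<and> (\<forall>k. comm_subgroup (Gp p A) (Gsub p A k) (Gcarrier p A) \<subseteq> Gsub_half p A k)
    \<and> (\<forall>k. comm_subgroup (Gp p A) (Gsub_half p A k) (Gcarrier p A) \<subseteq> Gsub_half p A (k + 1))"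
proof -
  interpret gca p A by (rule gca.intro) (fact assms)+
  have sub: "Gsub p A k \<subseteq> Gcarrier p A" for k by (auto simp: Gsub_def)
  have subh: "Gsub_half p A k \<subseteq> Gcarrier p A" for k by (auto simp: Gsub_half_def Gsub_def)
  have c1: "comm_subgroup (Gp p A) (Gcarrier p A) (Gcarrier p A) \<subseteq> Gsub_half p A 0"
  proof (rule comm_incl[OF sub_half order.refl order.refl])
    fix h g assume h: "h \<in> Gcarrier p A" and g: "g \<in> Gcarrier p A"
    show "inv\<^bsub>Gp p A\<^esub> h \<otimes>\<^bsub>Gp p A\<^esub> inv\<^bsub>Gp p A\<^esub> g \<otimes>\<^bsub>Gp p A\<^esub> h \<otimes>\<^bsub>Gp p A\<^esub> g \<in> Gsub_half p A 0"
      by (rule comm_G(2)[OF h g]) (use C0 C1[of "tr g" "tr h", OF tr_fR0[OF g] tr_fR0[OF h]] in auto)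
  qed
  have c2: "comm_subgroup (Gp p A) (Gsub_half p A 0) (Gsub_half p A 0) \<subseteq> Gsub p A 2"
  proof (rule comm_incl[OF sub_Gsub subh subh])
    fix h g assume h: "h \<in> Gsub_half p A 0" and g: "g \<in> Gsub_half p A 0"
    then have hh: "h \<in> Gcarrier p A" "SR 0 (tr h)" "fR (tr h 1) = 0"
      and gg: "g \<in> Gcarrier p A" "SR 0 (tr g)" "fR (tr g 1) = 0" by (simp_all add: Gsub_half_iff)
    show "inv\<^bsub>Gp p A\<^esub> h \<otimes>\<^bsub>Gp p A\<^esub> inv\<^bsub>Gp p A\<^esub> g \<otimes>\<^bsub>Gp p A\<^esub> h \<otimes>\<^bsub>Gp p A\<^esub> g \<in> Gsub p A 2"
      by (rule comm_G(1)[OF hh(1) gg(1)]) (rule C2[OF gg(2,3) hh(2,3)])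
  qed
  have c3: "comm_subgroup (Gp p A) (Gsub p A k) (Gsub p A k) \<subseteq> Gsub p A (k + 2)" if k: "1 \<le> k" for k
  proof (rule comm_incl[OF sub_Gsub sub sub])
    fix h g assume h: "h \<in> Gsub p A k" and g: "g \<in> Gsub p A k"
    then have hh: "h \<in> Gcarrier p A" "SR k (tr h)" and gg: "g \<in> Gcarrier p A" "SR k (tr g)"
      by (simp_all add: Gsub_iff)
    show "inv\<^bsub>Gp p A\<^esub> h \<otimes>\<^bsub>Gp p A\<^esub> inv\<^bsub>Gp p A\<^esub> g \<otimes>\<^bsub>Gp p A\<^esub> h \<otimes>\<^bsub>Gp p A\<^esub> g \<in> Gsub p A (k + 2)"
      by (rule comm_G(1)[OF hh(1) gg(1)]) (rule C3[OF k gg(2) hh(2)])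
  qed
  have c4: "comm_subgroup (Gp p A) (Gsub p A k) (Gcarrier p A) \<subseteq> Gsub_half p A k" for k
  proof (rule comm_incl[OF sub_half sub order.refl])
    fix h g assume h: "h \<in> Gsub p A k" and g: "g \<in> Gcarrier p A"
    then have hh: "h \<in> Gcarrier p A" "SR k (tr h)" by (simp_all add: Gsub_iff)
    show "inv\<^bsub>Gp p A\<^esub> h \<otimes>\<^bsub>Gp p A\<^esub> inv\<^bsub>Gp p A\<^esub> g \<otimes>\<^bsub>Gp p A\<^esub> h \<otimes>\<^bsub>Gp p A\<^esub> g \<in> Gsub_half p A k"
      by (rule comm_G(2)[OF hh(1) g])
         (use C4[of k "tr h" "tr g", OF hh(2) tr_fR0[OF g]] in auto)
  qed
  have c5: "comm_subgroup (Gp p A) (Gsub_half p A k) (Gcarrier p A) \<subseteq> Gsub_half p A (k + 1)" for k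
  proof (rule comm_incl[OF sub_half subh order.refl])
    fix h g assume h: "h \<in> Gsub_half p A k" and g: "g \<in> Gcarrier p A"
    then have hh: "h \<in> Gcarrier p A" "SR k (tr h)" "fR (tr h (k + 1)) = 0" by (simp_all add: Gsub_half_iff)
    have e: "k + 1 + 1 = k + 2" by simp
    show "inv\<^bsub>Gp p A\<^esub> h \<otimes>\<^bsub>Gp p A\<^esub> inv\<^bsub>Gp p A\<^esub> g \<otimes>\<^bsub>Gp p A\<^esub> h \<otimes>\<^bsub>Gp p A\<^esub> g \<in> Gsub_half p A (k + 1)"
      by (rule comm_G(2)[OF hh(1) g]) (use C5[of k "tr h" "tr g", OF hh(2,3) tr_fR0[OF g]] e in auto)
  qed
  show ?thesis using c1 c2 c3 c4 c5 by blast
qed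


end
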